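(* Let $n\ge 2$ and let $S$ be an admissible peak set in $S^B_n$. Then \[ \max\{d_\ell(\sigma,\rho) : \sigma,\rho\in P^B(S;n)\}=\begin{cases}2n-1, & \text{if } \{2,n-1\}\subseteq S,\\ 2n, & \text{otherwise.}\end{cases} \]
   Context: $S^B_n$ is the set of bijections $\sigma$ of $\{-n,\dots,-1,1,\dots,n\}$ with $\sigma(-i)=-\sigma(i)$ for all $i$; a signed permutation is written in one-line notation $\sigma(1)\cdots\sigma(n)$. A signed permutation $\sigma$ has a peak at index $i\in\{2,\dots,n-1\}$ if $\sigma(i-1)<\sigma(i)>\sigma(i+1)$ (usual order on integers). $Peak(\sigma)$ is the set of indices where $\sigma$ has a peak, and for $S\subseteq[n]$, $P^B(S;n)=\{\sigma\in S^B_n : Peak(\sigma)=S\}$. $S$ is an admissible peak set if $P^B(S;n)\neq\emptyset$ (equivalently, $S\subseteq\{2,\dots,n-1\}$ and $S$ contains no two consecutive integers). The $\ell_\infty$-metric is $d_\ell(\sigma,\rho)=\max\{|\sigma(i)-\rho(i)| : i\in[n]\}$. *)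

theory Defs
  imports Main
begin

definition signed_set :: "nat \<Rightarrow> int set" where
  "signed_set n = {-int n..-1} \<union> {1..int n}"

text \<open>Signed permutations of S^B_n: bijections of {-n..-1,1..n} with sigma(-i) = -sigma(i);
  outside the ground set they are fixed (extensional convention, as for permutes).\<close>
definition signed_perms :: "nat \<Rightarrow> (int \<Rightarrow> int) set" where
  "signed_perms n = {\<sigma>. bij_betw \<sigma> (signed_set n) (signed_set n)
                         \<and> (\<forall>i\<in>signed_set n. \<sigma> (-i) = - \<sigma> i)
                         \<and> (\<forall>i. i \<notin> signed_set n \<longrightarrow> \<sigma> i = i)}"

definition Peak :: "nat \<Rightarrow> (int \<Rightarrow> int) \<Rightarrow> int set" where
  "Peak n \<sigma> = {i. 2 \<le> i \<and> i \<le> int n - 1 \<and> \<sigma> (i - 1) < \<sigma> i \<and> \<sigma> i > \<sigma> (i + 1)}"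

definition PB :: "int set \<Rightarrow> nat \<Rightarrow> (int \<Rightarrow> int) set" where
  "PB S n = {\<sigma> \<in> signed_perms n. Peak n \<sigma> = S}"

definition admissible_peak_set :: "int set \<Rightarrow> nat \<Rightarrow> bool" where
  "admissible_peak_set S n \<longleftrightarrow> PB S n \<noteq> {}"

definition d_ell :: "nat \<Rightarrow> (int \<Rightarrow> int) \<Rightarrow> (int \<Rightarrow> int) \<Rightarrow> int" where
  "d_ell n \<sigma> \<rho> = Max {\<bar>\<sigma> i - \<rho> i\<bar> | i. i \<in> {1..int n}}"

end

theory Submission imports Defs begin

definition extf :: "nat \<Rightarrow> (int \<Rightarrow> int) \<Rightarrow> int \<Rightarrow> int" where
  "extf n f i = (if 1 \<le> i \<and> i \<le> int n then f i
     else if - int n \<le> i \<and> i \<le> -1 then - f (-i) else i)"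

lemma extf_perm:
  assumes rng: "\<And>j. 1 \<le> j \<Longrightarrow> j \<le> int n \<Longrightarrow> f j \<in> signed_set n"
    and inj: "inj_on (\<lambda>j. \<bar>f j\<bar>) {1..int n}"
  shows "extf n f \<in> signed_perms n"
proof -
  have m: "extf n f i \<in> signed_set n" if "i \<in> signed_set n" for i
    using that rng[of i] rng[of "-i"] by (auto simp: extf_def signed_set_def)
  have ab: "\<bar>extf n f i\<bar> = \<bar>f \<bar>i\<bar>\<bar>" if "i \<in> signed_set n" for i
    using that by (auto simp: extf_def signed_set_def)
  have nz: "extf n f i \<noteq> 0" if "i \<in> signed_set n" for i
    using m[OF that] by (auto simp: signed_set_def)
  have ij: "inj_on (extf n f) (signed_set n)"
  proof (rule inj_onI)
    fix x y assume x: "x \<in> signed_set n" and y: "y \<in> signed_set n" and e: "extf n f x = extf n f y"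
    have "\<bar>f \<bar>x\<bar>\<bar> = \<bar>f \<bar>y\<bar>\<bar>" using ab[OF x] ab[OF y] e by simp
    moreover have "\<bar>x\<bar> \<in> {1..int n}" "\<bar>y\<bar> \<in> {1..int n}" using x y by (auto simp: signed_set_def)
    ultimately have "\<bar>x\<bar> = \<bar>y\<bar>" using inj by (auto dest: inj_onD)
    then have "x = y \<or> x = -y" by arith
    moreover have "x = -y \<Longrightarrow> x \<noteq> y \<Longrightarrow> False"
    proof -
      assume "x = -y" "x \<noteq> y"
      then have "extf n f x = - extf n f y" using y by (auto simp: extf_def signed_set_def)
      with e nz[OF y] show False by simp
    qed
    ultimately show "x = y" by blast
  qed
  have "extf n f ` signed_set n = signed_set n"
  proof (rule endo_inj_surj[OF _ _ ij])
    show "finite (signed_set n)" by (simp add: signed_set_def)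
    show "extf n f ` signed_set n \<subseteq> signed_set n" using m by blast
  qed
  hence "bij_betw (extf n f) (signed_set n) (signed_set n)" using ij by (simp add: bij_betw_def)
  moreover have "\<forall>i\<in>signed_set n. extf n f (-i) = - extf n f i"
    by (auto simp: extf_def signed_set_def)
  moreover have "\<forall>i. i \<notin> signed_set n \<longrightarrow> extf n f i = i"
    by (auto simp: extf_def signed_set_def)
  ultimately show ?thesis by (simp add: signed_perms_def)
qed

lemma Peak_extf: "Peak n (extf n f) = {i. 2 \<le> i \<and> i \<le> int n - 1 \<and> f (i - 1) < f i \<and> f i > f (i + 1)}"
  by (auto simp: Peak_def extf_def)

definition fT :: "nat \<Rightarrow> int set \<Rightarrow> int \<Rightarrow> int" where
  "fT n T j = (if j \<in> T then int n + 1 - j else j - int n - 1)"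
definition gT :: "int set \<Rightarrow> int \<Rightarrow> int" where
  "gT T j = (if j \<in> T then j else - j)"
definition hS :: "nat \<Rightarrow> int set \<Rightarrow> int \<Rightarrow> int" where
  "hS n S j = (if j = 1 then int n - 1 else if j = 2 then int n else fT n S j)"

lemma fT_perm: "extf n (fT n T) \<in> signed_perms n"
  by (rule extf_perm) (auto simp: fT_def signed_set_def inj_on_def)
lemma gT_perm: "extf n (gT T) \<in> signed_perms n"
  by (rule extf_perm) (auto simp: gT_def signed_set_def inj_on_def)
lemma hS_perm: "int n \<ge> 3 \<Longrightarrow> extf n (hS n S) \<in> signed_perms n"
  by (rule extf_perm) (auto simp: hS_def fT_def signed_set_def inj_on_def)

lemma fT_Peak: assumes "\<forall>i\<in>T. i + 1 \<notin> T" shows "Peak n (extf n (fT n T)) = T \<inter> {2..int n - 1}"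
  unfolding Peak_extf
proof (intro set_eqI iffI)
  fix i assume "i \<in> {i. 2 \<le> i \<and> i \<le> int n - 1 \<and> fT n T (i - 1) < fT n T i \<and> fT n T (i + 1) < fT n T i}"
  then show "i \<in> T \<inter> {2..int n - 1}" by (auto simp: fT_def split: if_splits)
next
  fix i assume "i \<in> T \<inter> {2..int n - 1}"
  then show "i \<in> {i. 2 \<le> i \<and> i \<le> int n - 1 \<and> fT n T (i - 1) < fT n T i \<and> fT n T (i + 1) < fT n T i}"
    using assms[rule_format, of i] assms[rule_format, of "i-1"] by (auto simp: fT_def)
qed

lemma gT_Peak: assumes "\<forall>i\<in>T. i + 1 \<notin> T" shows "Peak n (extf n (gT T)) = T \<inter> {2..int n - 1}"
  unfolding Peak_extf
proof (intro set_eqI iffI)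
  fix i assume "i \<in> {i. 2 \<le> i \<and> i \<le> int n - 1 \<and> gT T (i - 1) < gT T i \<and> gT T (i + 1) < gT T i}"
  then show "i \<in> T \<inter> {2..int n - 1}" by (auto simp: gT_def split: if_splits)
next
  fix i assume "i \<in> T \<inter> {2..int n - 1}"
  then show "i \<in> {i. 2 \<le> i \<and> i \<le> int n - 1 \<and> gT T (i - 1) < gT T i \<and> gT T (i + 1) < gT T i}"
    using assms[rule_format, of i] assms[rule_format, of "i-1"] by (auto simp: gT_def)
qed

lemma hS_Peak: assumes "\<forall>i\<in>S. i + 1 \<notin> S" "S \<subseteq> {2..int n - 1}" "2 \<in> S"
  shows "Peak n (extf n (hS n S)) = S"
  unfolding Peak_extf
proof (intro set_eqI iffI)
  fix i assume "i \<in> {i. 2 \<le> i \<and> i \<le> int n - 1 \<and> hS n S (i - 1) < hS n S i \<and> hS n S (i + 1) < hS n S i}"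
  then show "i \<in> S" using assms(3) by (auto simp: hS_def fT_def split: if_splits)
next
  fix i assume i: "i \<in> S"
  have n3: "3 \<notin> S" using assms(1,3) by force
  from i show "i \<in> {i. 2 \<le> i \<and> i \<le> int n - 1 \<and> hS n S (i - 1) < hS n S i \<and> hS n S (i + 1) < hS n S i}"
    using assms(2) assms(1)[rule_format, of i] assms(1)[rule_format, of "i-1"] n3
    by (auto simp: hS_def fT_def)
qed


lemma perm_val: assumes "\<sigma> \<in> signed_perms n" "1 \<le> j" "j \<le> int n"
  shows "- int n \<le> \<sigma> j \<and> \<sigma> j \<le> int n \<and> \<sigma> j \<noteq> 0"
proof -
  have "j \<in> signed_set n" using assms(2,3) by (simp add: signed_set_def)
  hence "\<sigma> j \<in> signed_set n" using assms(1) unfolding signed_perms_def bij_betw_def by blast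
  thus ?thesis by (auto simp: signed_set_def)
qed

lemma perm_inj: assumes "\<sigma> \<in> signed_perms n" "1 \<le> j" "j \<le> int n" "1 \<le> k" "k \<le> int n" "j \<noteq> k"
  shows "\<sigma> j \<noteq> \<sigma> k"
proof -
  have "j \<in> signed_set n" "k \<in> signed_set n" using assms by (auto simp: signed_set_def)
  moreover have "inj_on \<sigma> (signed_set n)" using assms(1) unfolding signed_perms_def bij_betw_def by blast
  ultimately show ?thesis using assms(6) by (auto dest: inj_onD)
qed

lemma d_ell_ge: assumes "1 \<le> i" "i \<le> int n" shows "\<bar>\<sigma> i - \<rho> i\<bar> \<le> d_ell n \<sigma> \<rho>"
  unfolding d_ell_def
proof (rule Max_ge)
  have "{\<bar>\<sigma> i - \<rho> i\<bar> | i. i \<in> {1..int n}} = (\<lambda>i. \<bar>\<sigma> i - \<rho> i\<bar>) ` {1..int n}" by auto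
  thus "finite {\<bar>\<sigma> i - \<rho> i\<bar> | i. i \<in> {1..int n}}" by simp
  show "\<bar>\<sigma> i - \<rho> i\<bar> \<in> {\<bar>\<sigma> i - \<rho> i\<bar> | i. i \<in> {1..int n}}" using assms by auto
qed

lemma d_ell_le: assumes "n \<ge> 1" "\<And>i. 1 \<le> i \<Longrightarrow> i \<le> int n \<Longrightarrow> \<bar>\<sigma> i - \<rho> i\<bar> \<le> B"
  shows "d_ell n \<sigma> \<rho> \<le> B"
  unfolding d_ell_def
proof (subst Max_le_iff)
  have "{\<bar>\<sigma> i - \<rho> i\<bar> | i. i \<in> {1..int n}} = (\<lambda>i. \<bar>\<sigma> i - \<rho> i\<bar>) ` {1..int n}" by auto
  thus "finite {\<bar>\<sigma> i - \<rho> i\<bar> | i. i \<in> {1..int n}}" by simp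
  show "{\<bar>\<sigma> i - \<rho> i\<bar> | i. i \<in> {1..int n}} \<noteq> {}" using assms(1) by auto
  show "\<forall>a\<in>{\<bar>\<sigma> i - \<rho> i\<bar> | i. i \<in> {1..int n}}. a \<le> B" using assms(2) by auto
qed

lemma max_not_both:
  assumes s: "\<sigma> \<in> signed_perms n" and r: "\<rho> \<in> signed_perms n"
    and P: "Peak n \<sigma> = Peak n \<rho>" and two: "2 \<in> Peak n \<sigma>" and nm: "int n - 1 \<in> Peak n \<sigma>"
    and i: "1 \<le> i" "i \<le> int n" and si: "\<sigma> i = int n" and ri: "\<rho> i = - int n"
  shows False
proof -
  have n3: "int n \<ge> 3" using two by (auto simp: Peak_def)
  have "i \<noteq> 1"
  proof
    assume "i = 1"
    hence "\<sigma> 2 > int n" using two si by (auto simp: Peak_def)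
    thus False using perm_val[OF s, of 2] n3 by auto
  qed
  moreover have "i \<noteq> int n"
  proof
    assume "i = int n"
    hence "\<sigma> (int n - 1) > int n" using nm si by (auto simp: Peak_def)
    thus False using perm_val[OF s, of "int n - 1"] n3 by auto
  qed
  ultimately have i2: "2 \<le> i" "i \<le> int n - 1" using i by auto
  have "\<sigma> (i - 1) < \<sigma> i" using perm_val[OF s, of "i-1"] perm_inj[OF s, of "i-1" i] i2 si by force
  moreover have "\<sigma> (i + 1) < \<sigma> i" using perm_val[OF s, of "i+1"] perm_inj[OF s, of "i+1" i] i2 si by force
  ultimately have "i \<in> Peak n \<rho>" using P i2 by (auto simp: Peak_def)
  hence "\<rho> (i - 1) < - int n" using ri by (auto simp: Peak_def)
  thus False using perm_val[OF r, of "i-1"] i2 by auto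
qed

theorem theorem4p8:
  fixes n :: nat and S :: "int set"
  assumes "n \<ge> 2" and "admissible_peak_set S n"
  shows "Max {d_ell n \<sigma> \<rho> | \<sigma> \<rho>. \<sigma> \<in> PB S n \<and> \<rho> \<in> PB S n}
         = (if {2, int n - 1} \<subseteq> S then 2 * int n - 1 else 2 * int n)"
proof -
  define D where "D = {d_ell n \<sigma> \<rho> | \<sigma> \<rho>. \<sigma> \<in> PB S n \<and> \<rho> \<in> PB S n}"
  define x where "x = (if {2, int n - 1} \<subseteq> S then 2 * int n - 1 else 2 * int n)"
  obtain \<sigma>0 where s0: "\<sigma>0 \<in> signed_perms n" "Peak n \<sigma>0 = S"
    using assms(2) by (auto simp: admissible_peak_set_def PB_def)
  have Ssub: "S \<subseteq> {2..int n - 1}" using s0(2) by (auto simp: Peak_def)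
  have noc: "\<forall>i\<in>S. i + 1 \<notin> S" using s0(2) by (auto simp: Peak_def)
  have Dle: "y \<le> x" if "y \<in> D" for y
  proof -
    obtain \<sigma> \<rho> where sr: "\<sigma> \<in> PB S n" "\<rho> \<in> PB S n" "y = d_ell n \<sigma> \<rho>"
      using \<open>y \<in> D\<close> by (auto simp: D_def)
    have sp: "\<sigma> \<in> signed_perms n" "\<rho> \<in> signed_perms n" "Peak n \<sigma> = S" "Peak n \<rho> = S"
      using sr by (auto simp: PB_def)
    have "\<bar>\<sigma> i - \<rho> i\<bar> \<le> x" if i: "1 \<le> i" "i \<le> int n" for i
    proof -
      have b: "\<bar>\<sigma> i - \<rho> i\<bar> \<le> 2 * int n" using perm_val[OF sp(1) i] perm_val[OF sp(2) i] by arith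
      show ?thesis
      proof (cases "{2, int n - 1} \<subseteq> S")
        case False thus ?thesis using b unfolding x_def by auto
      next
        case True
        have "\<not> (\<sigma> i = int n \<and> \<rho> i = - int n)"
          using max_not_both[OF sp(1,2) _ _ _ i, of] sp True by auto
        moreover have "\<not> (\<rho> i = int n \<and> \<sigma> i = - int n)"
          using max_not_both[OF sp(2,1) _ _ _ i, of] sp True by auto
        ultimately have "\<bar>\<sigma> i - \<rho> i\<bar> \<noteq> 2 * int n"
          using perm_val[OF sp(1) i] perm_val[OF sp(2) i] by arith
        thus ?thesis using b True by (simp add: x_def)
      qed
    qed
    thus ?thesis using d_ell_le[of n \<sigma> \<rho> x] assms(1) sr(3) by auto
  qed
  have Dge0: "y \<ge> 0" if "y \<in> D" for y
  proof -
    obtain \<sigma> \<rho> where "y = d_ell n \<sigma> \<rho>" using \<open>y \<in> D\<close> by (auto simp: D_def)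
    thus ?thesis using d_ell_ge[of 1 n \<sigma> \<rho>] assms(1) by force
  qed
  have fin: "finite D" by (rule finite_subset[of D "{0..x}"]) (use Dle Dge0 in auto)
  have ex: "\<exists>y\<in>D. x \<le> y"
  proof (cases "{2, int n - 1} \<subseteq> S")
    case True
    let ?s = "extf n (hS n S)" and ?r = "extf n (fT n S)"
    have n3: "int n \<ge> 3" using True Ssub by auto
    have n1: "1 \<notin> S" using Ssub by auto
    have "?s \<in> PB S n" using hS_perm[OF n3] hS_Peak[OF noc Ssub] True by (auto simp: PB_def)
    moreover have "?r \<in> PB S n" using fT_perm fT_Peak[OF noc] Ssub by (auto simp: PB_def)
    moreover have "x \<le> d_ell n ?s ?r" using d_ell_ge[of 1 n ?s ?r] True n3 n1
      by (auto simp: x_def extf_def hS_def fT_def)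
    ultimately show ?thesis by (auto simp: D_def)
  next
    case False
    have n1: "1 \<notin> S" "int n \<notin> S" using Ssub by auto
    from False have "2 \<notin> S \<or> int n - 1 \<notin> S" by auto
    thus ?thesis
    proof
      assume n2: "2 \<notin> S"
      let ?s = "extf n (fT n (insert 1 S))" and ?r = "extf n (fT n S)"
      have nc: "\<forall>i\<in>insert 1 S. i + 1 \<notin> insert 1 S" using noc n2 Ssub by auto
      have "?s \<in> PB S n" using fT_perm fT_Peak[OF nc] Ssub by (auto simp: PB_def)
      moreover have "?r \<in> PB S n" using fT_perm fT_Peak[OF noc] Ssub by (auto simp: PB_def)
      moreover have "x \<le> d_ell n ?s ?r" using d_ell_ge[of 1 n ?s ?r] False assms(1) n1
        by (auto simp: x_def extf_def fT_def)
      ultimately show ?thesis by (auto simp: D_def)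
    next
      assume n2: "int n - 1 \<notin> S"
      let ?s = "extf n (gT (insert (int n) S))" and ?r = "extf n (gT S)"
      have nc: "\<forall>i\<in>insert (int n) S. i + 1 \<notin> insert (int n) S"
      proof
        fix i assume i: "i \<in> insert (int n) S"
        show "i + 1 \<notin> insert (int n) S"
        proof (cases "i = int n")
          case True thus ?thesis using Ssub by auto
        next
          case False
          hence iS: "i \<in> S" using i by auto
          have "i \<noteq> int n - 1" using iS n2 by auto
          hence "i + 1 \<noteq> int n" by linarith
          thus ?thesis using noc iS by auto
        qed
      qed
      have "?s \<in> PB S n" using gT_perm gT_Peak[OF nc] Ssub by (auto simp: PB_def)
      moreover have "?r \<in> PB S n" using gT_perm gT_Peak[OF noc] Ssub by (auto simp: PB_def)
      moreover have "x \<le> d_ell n ?s ?r" using d_ell_ge[of "int n" n ?s ?r] False assms(1) n1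
        by (auto simp: x_def extf_def gT_def)
      ultimately show ?thesis by (auto simp: D_def)
    qed
  qed
  have "Max D = x"
    using ex Dle fin by (metis Max_ge antisym empty_iff Max_in order_trans)
  thus ?thesis by (simp add: D_def x_def)
qed

end
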